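(* Let $\lambda\neq0$ be a constant and let $\phi(x,t)$ be a smooth function with $\phi_x\neq0$ on a connected open domain satisfying $\{\phi;x\}_t+\frac4\lambda\big(\frac{\phi_t}{\phi_x}\big)_x=0$. Set $p=\frac{\phi_t}{\lambda\phi_x}$ and $U=\frac12\{\phi;x\}+\frac1\lambda$. Then a function $V(x,t)$ solves $$V_{xx}+\Big(U-\frac1\lambda\Big)V=0,\qquad V_t=\lambda\Big(pV_x-\frac12 p_xV\Big)$$ if and only if $V=\dfrac{A\phi+B}{\sqrt{\phi_x}}$ for constants $A,B$ (fixed smooth branch of the square root); the nontrivial solutions correspond to $(A,B)\neq(0,0)$.
   Context: The Schwarzian derivative of a function $\phi(x,t)$ with $\phi_x\neq0$ is $\{\phi;x\}=\frac{\phi_{xxx}}{\phi_x}-\frac32\frac{\phi_{xx}^2}{\phi_x^2}$. All functions are smooth. *)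

theory Defs
  imports "HOL-Analysis.Analysis"
begin

definition px :: "(real \<times> real \<Rightarrow> real) \<Rightarrow> real \<times> real \<Rightarrow> real" where
  "px f = (\<lambda>(x, t). deriv (\<lambda>y. f (y, t)) x)"

definition pt :: "(real \<times> real \<Rightarrow> real) \<Rightarrow> real \<times> real \<Rightarrow> real" where
  "pt f = (\<lambda>(x, t). deriv (\<lambda>s. f (x, s)) t)"

fun dop :: "bool list \<Rightarrow> (real \<times> real \<Rightarrow> real) \<Rightarrow> real \<times> real \<Rightarrow> real" where
  "dop [] f = f"
| "dop (b # w) f = (if b then px else pt) (dop w f)"

definition smooth2_on :: "(real \<times> real) set \<Rightarrow> (real \<times> real \<Rightarrow> real) \<Rightarrow> bool" where
  "smooth2_on D f \<longleftrightarrow> (\<forall>w. continuous_on D (dop w f) \<and>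
     (\<forall>p\<in>D. (\<lambda>y. dop w f (y, snd p)) differentiable (at (fst p)) \<and>
             (\<lambda>s. dop w f (fst p, s)) differentiable (at (snd p))))"

definition schwarzian :: "(real \<times> real \<Rightarrow> real) \<Rightarrow> real \<times> real \<Rightarrow> real" where
  "schwarzian \<phi> = (\<lambda>p. px (px (px \<phi>)) p / px \<phi> p - 3/2 * (px (px \<phi>) p)\<^sup>2 / (px \<phi> p)\<^sup>2)"

end

theory Submission
  imports Defs
begin


lemma dop_px: "dop w (px f) = dop (w @ [True]) f"
  by (induction w) auto
lemma dop_pt: "dop w (pt f) = dop (w @ [False]) f"
  by (induction w) auto

lemma smooth_px: "smooth2_on D f \<Longrightarrow> smooth2_on D (px f)"
  unfolding smooth2_on_def dop_px by blast
lemma smooth_pt: "smooth2_on D f \<Longrightarrow> smooth2_on D (pt f)"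
  unfolding smooth2_on_def dop_pt by blast

lemma smooth_cont: "smooth2_on D f \<Longrightarrow> continuous_on D f"
  unfolding smooth2_on_def by (metis dop.simps(1))

lemma hx: assumes "smooth2_on D f" "(x,t) \<in> D"
  shows "((\<lambda>y. f (y,t)) has_real_derivative px f (x,t)) (at x)"
proof -
  have "(\<lambda>y. f (y,t)) differentiable (at x)"
    using assms unfolding smooth2_on_def by (metis dop.simps(1) fst_conv snd_conv)
  then show ?thesis unfolding px_def
    using DERIV_deriv_iff_real_differentiable by auto
qed

lemma ht: assumes "smooth2_on D f" "(x,t) \<in> D"
  shows "((\<lambda>s. f (x,s)) has_real_derivative pt f (x,t)) (at t)"
proof -
  have "(\<lambda>s. f (x,s)) differentiable (at t)"
    using assms unfolding smooth2_on_def by (metis dop.simps(1) fst_conv snd_conv)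
  then show ?thesis unfolding pt_def
    using DERIV_deriv_iff_real_differentiable by auto
qed

lemma px_eqI: "((\<lambda>y. g (y,t)) has_real_derivative d) (at x) \<Longrightarrow> px g (x,t) = d"
  unfolding px_def by (simp add: DERIV_imp_deriv)
lemma pt_eqI: "((\<lambda>s. g (x,s)) has_real_derivative d) (at t) \<Longrightarrow> pt g (x,t) = d"
  unfolding pt_def by (simp add: DERIV_imp_deriv)

lemma open_slice_x: "open (D::(real*real) set) \<Longrightarrow> open {y. (y,t) \<in> D}"
proof -
  assume "open D"
  have "continuous_on UNIV (\<lambda>y::real. (y,t))" by (intro continuous_intros)
  then show ?thesis using open_vimage[OF \<open>open D\<close>, of "\<lambda>y::real. (y,t)"] by (simp add: vimage_def)
qed
lemma open_slice_t: "open (D::(real*real) set) \<Longrightarrow> open {s. (x,s) \<in> D}"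
proof -
  assume "open D"
  have "continuous_on UNIV (\<lambda>s::real. (x,s))" by (intro continuous_intros)
  then show ?thesis using open_vimage[OF \<open>open D\<close>, of "\<lambda>s::real. (x,s)"] by (simp add: vimage_def)
qed

lemma hx_transfer:
  fixes D :: "(real*real) set"
  assumes "open D" "(x,t) \<in> D" "\<And>r. r \<in> D \<Longrightarrow> g r = h r"
    "((\<lambda>y. h (y,t)) has_real_derivative d) (at x)"
  shows "((\<lambda>y. g (y,t)) has_real_derivative d) (at x)"
  apply (rule has_field_derivative_transform_within_open[OF assms(4) open_slice_x[OF assms(1)]])
  using assms by auto
lemma ht_transfer:
  fixes D :: "(real*real) set"
  assumes "open D" "(x,t) \<in> D" "\<And>r. r \<in> D \<Longrightarrow> g r = h r"
    "((\<lambda>s. h (x,s)) has_real_derivative d) (at t)"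
  shows "((\<lambda>s. g (x,s)) has_real_derivative d) (at t)"
  apply (rule has_field_derivative_transform_within_open[OF assms(4) open_slice_t[OF assms(1)]])
  using assms by auto

lemma px_transfer:
  fixes D :: "(real*real) set"
  assumes "open D" "q \<in> D" "\<And>r. r \<in> D \<Longrightarrow> g r = h r"
  shows "px g q = px h q"
proof -
  obtain x t where q: "q = (x,t)" by fastforce
  have "open {y. (y,t) \<in> D}" by (rule open_slice_x[OF assms(1)])
  moreover have "x \<in> {y. (y,t) \<in> D}" using assms(2) q by simp
  ultimately have "eventually (\<lambda>y. y \<in> {y. (y,t) \<in> D}) (nhds x)" by (rule eventually_nhds_in_open)
  then have "eventually (\<lambda>y. g (y,t) = h (y,t)) (nhds x)"
    by (rule eventually_mono) (use assms(3) in auto)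
  then have "deriv (\<lambda>y. g (y,t)) x = deriv (\<lambda>y. h (y,t)) x" by (rule deriv_cong_ev) simp
  then show ?thesis by (simp add: px_def q)
qed

lemma box_dist:
  fixes x y t s h :: real
  assumes "x \<le> y" "y \<le> x + h" "t \<le> s" "s \<le> t + h"
  shows "dist (y,s) (x,t) \<le> 2*h"
proof -
  have "dist (y,s) (x,t) = sqrt ((dist y x)\<^sup>2 + (dist s t)\<^sup>2)" by (rule dist_Pair_Pair)
  also have "\<dots> \<le> \<bar>dist y x\<bar> + \<bar>dist s t\<bar>" by (rule sqrt_sum_squares_le_sum_abs)
  also have "\<dots> \<le> 2*h" using assms by (simp add: dist_real_def)
  finally show ?thesis .
qed

lemma aux_abs: "\<bar>a - c\<bar> < \<bar>c - d\<bar>/2 \<Longrightarrow> \<bar>b - d\<bar> < \<bar>c - d\<bar>/2 \<Longrightarrow> a = b \<Longrightarrow> False" for a b c d :: real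
proof -
  assume h: "\<bar>a - c\<bar> < \<bar>c - d\<bar>/2" "\<bar>b - d\<bar> < \<bar>c - d\<bar>/2" "a = b"
  have t: "\<bar>c - d\<bar> \<le> \<bar>a - c\<bar> + \<bar>b - d\<bar>"
    using abs_triangle_ineq[of "c - a" "a - d"] h(3) by (simp add: abs_minus_commute)
  have g: "\<And>X Y Z::real. X < Z/2 \<Longrightarrow> Y < Z/2 \<Longrightarrow> Z \<le> X + Y \<Longrightarrow> False" by linarith
  show False using g[OF h(1,2) t] .
qed

lemma clairaut:
  assumes D: "open D" and sm: "smooth2_on D f" and q: "(x,t) \<in> D"
  shows "pt (px f) (x,t) = px (pt f) (x,t)"
proof (rule ccontr)
  assume ne: "pt (px f) (x,t) \<noteq> px (pt f) (x,t)"
  define e where "e = \<bar>pt (px f) (x,t) - px (pt f) (x,t)\<bar> / 2"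
  have e: "e > 0" using ne by (simp add: e_def)
  have c1: "isCont (pt (px f)) (x,t)"
    using smooth_cont[OF smooth_pt[OF smooth_px[OF sm]]] D q continuous_on_eq_continuous_at by blast
  have c2: "isCont (px (pt f)) (x,t)"
    using smooth_cont[OF smooth_px[OF smooth_pt[OF sm]]] D q continuous_on_eq_continuous_at by blast
  obtain d1 where d1: "d1 > 0" "\<And>r. dist r (x,t) < d1 \<Longrightarrow> dist (pt (px f) r) (pt (px f) (x,t)) < e"
    using c1 e unfolding continuous_at_eps_delta by blast
  obtain d2 where d2: "d2 > 0" "\<And>r. dist r (x,t) < d2 \<Longrightarrow> dist (px (pt f) r) (px (pt f) (x,t)) < e"
    using c2 e unfolding continuous_at_eps_delta by blast
  obtain d3 where d3: "d3 > 0" "ball (x,t) d3 \<subseteq> D"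
    using D q open_contains_ball by blast
  define h where "h = Min {d1, d2, d3} / 4"
  have h: "h > 0" "2*h < d1" "2*h < d2" "2*h < d3" using d1 d2 d3 by (auto simp: h_def)
  have inbox: "dist (y,s) (x,t) < d1 \<and> dist (y,s) (x,t) < d2 \<and> (y,s) \<in> D"
    if "x \<le> y" "y \<le> x + h" "t \<le> s" "s \<le> t + h" for y s
  proof -
    have "dist (y,s) (x,t) \<le> 2*h" using box_dist that by blast
    then show ?thesis using h d3(2) by (auto simp: dist_commute subset_iff)
  qed
  define \<Delta> where "\<Delta> = f (x+h, t+h) - f (x+h, t) - f (x, t+h) + f (x,t)"
  obtain \<xi> where \<xi>: "x < \<xi>" "\<xi> < x + h"
    "(\<lambda>y. f (y,t+h) - f (y,t)) (x+h) - (\<lambda>y. f (y,t+h) - f (y,t)) x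
      = (x + h - x) * (px f (\<xi>,t+h) - px f (\<xi>,t))"
  proof -
    have "\<exists>z. x < z \<and> z < x + h \<and> (\<lambda>y. f (y,t+h) - f (y,t)) (x+h) - (\<lambda>y. f (y,t+h) - f (y,t)) x
      = (x + h - x) * (\<lambda>y. px f (y,t+h) - px f (y,t)) z"
      apply (rule MVT2)
      using h apply simp
      apply (intro derivative_intros)
      using inbox h by (auto intro!: hx[OF sm])
    then show ?thesis using that by auto
  qed
  obtain \<eta> where \<eta>: "t < \<eta>" "\<eta> < t + h"
    "px f (\<xi>,t+h) - px f (\<xi>,t) = (t + h - t) * pt (px f) (\<xi>,\<eta>)"
  proof -
    have "\<exists>z. t < z \<and> z < t + h \<and> (\<lambda>s. px f (\<xi>,s)) (t+h) - (\<lambda>s. px f (\<xi>,s)) t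
      = (t + h - t) * (\<lambda>s. pt (px f) (\<xi>,s)) z"
      apply (rule MVT2)
      using h apply simp
      using inbox h \<xi> by (auto intro!: ht[OF smooth_px[OF sm]])
    then show ?thesis using that by auto
  qed
  obtain \<eta>' where \<eta>': "t < \<eta>'" "\<eta>' < t + h"
    "(\<lambda>s. f (x+h,s) - f (x,s)) (t+h) - (\<lambda>s. f (x+h,s) - f (x,s)) t
      = (t + h - t) * (pt f (x+h,\<eta>') - pt f (x,\<eta>'))"
  proof -
    have "\<exists>z. t < z \<and> z < t + h \<and> (\<lambda>s. f (x+h,s) - f (x,s)) (t+h) - (\<lambda>s. f (x+h,s) - f (x,s)) t
      = (t + h - t) * (\<lambda>s. pt f (x+h,s) - pt f (x,s)) z"
      apply (rule MVT2)
      using h apply simp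
      apply (intro derivative_intros)
      using inbox h by (auto intro!: ht[OF sm])
    then show ?thesis using that by auto
  qed
  obtain \<xi>' where \<xi>': "x < \<xi>'" "\<xi>' < x + h"
    "pt f (x+h,\<eta>') - pt f (x,\<eta>') = (x + h - x) * px (pt f) (\<xi>',\<eta>')"
  proof -
    have "\<exists>z. x < z \<and> z < x + h \<and> (\<lambda>y. pt f (y,\<eta>')) (x+h) - (\<lambda>y. pt f (y,\<eta>')) x
      = (x + h - x) * (\<lambda>y. px (pt f) (y,\<eta>')) z"
      apply (rule MVT2)
      using h apply simp
      using inbox h \<eta>' by (auto intro!: hx[OF smooth_pt[OF sm]])
    then show ?thesis using that by auto
  qed
  have "\<Delta> = h * h * pt (px f) (\<xi>,\<eta>)" using \<xi>(3) \<eta>(3) unfolding \<Delta>_def by (simp add: algebra_simps)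
  moreover have "\<Delta> = h * h * px (pt f) (\<xi>',\<eta>')" using \<eta>'(3) \<xi>'(3) unfolding \<Delta>_def by (simp add: algebra_simps)
  ultimately have eq: "pt (px f) (\<xi>,\<eta>) = px (pt f) (\<xi>',\<eta>')" using h by simp
  have "dist (pt (px f) (\<xi>,\<eta>)) (pt (px f) (x,t)) < e"
    using d1(2) inbox \<xi> \<eta> by auto
  moreover have "dist (px (pt f) (\<xi>',\<eta>')) (px (pt f) (x,t)) < e"
    using d2(2) inbox \<xi>' \<eta>' by auto
  ultimately show False using eq unfolding e_def dist_real_def using aux_abs by blast
qed



lemma DERIV_val: "(f has_real_derivative d) F \<Longrightarrow> d = e \<Longrightarrow> (f has_real_derivative e) F"
  by simp

lemma sqrt_abs_deriv:
  fixes f :: "real \<Rightarrow> real"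
  assumes "(f has_real_derivative d) (at x)" "f x \<noteq> 0"
  shows "((\<lambda>y. sqrt \<bar>f y\<bar>) has_real_derivative sqrt \<bar>f x\<bar> * d / (2 * f x)) (at x)"
proof -
  have e: "(\<lambda>y. sqrt \<bar>f y\<bar>) = (\<lambda>y. sqrt (sqrt (f y * f y)))" by simp
  have pos: "0 < f x * f x" by (metis assms(2) not_real_square_gt_zero)
  have pos2: "0 < sqrt (f x * f x)" using assms(2) by simp
  have d1: "((\<lambda>y. f y * f y) has_real_derivative d * f x + f x * d) (at x)"
    using DERIV_mult[OF assms(1) assms(1)] by simp
  have d2: "((\<lambda>y. sqrt (sqrt (f y * f y))) has_real_derivative
      (inverse (sqrt (sqrt (f x * f x))) / 2) * ((inverse (sqrt (f x * f x)) / 2) * (d * f x + f x * d))) (at x)"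
    by (rule DERIV_chain2[OF DERIV_real_sqrt[OF pos2] DERIV_chain2[OF DERIV_real_sqrt[OF pos] d1]])
  define r where "r = sqrt \<bar>f x\<bar>"
  have r: "r > 0" "r * r = \<bar>f x\<bar>" using assms(2) by (auto simp: r_def)
  have ab: "\<bar>f x\<bar> * \<bar>f x\<bar> = f x * f x" by (simp add: abs_mult_self_eq)
  have eqv: "(inverse (sqrt (sqrt (f x * f x))) / 2) * ((inverse (sqrt (f x * f x)) / 2) * (d * f x + f x * d))
      = sqrt \<bar>f x\<bar> * d / (2 * f x)"
  proof -
    have "(inverse (sqrt (sqrt (f x * f x))) / 2) * ((inverse (sqrt (f x * f x)) / 2) * (d * f x + f x * d))
        = d * f x / (2 * r * (r * r))"
    proof -
      have s1: "sqrt (f x * f x) = r * r" using r by simp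
      have s2: "sqrt (sqrt (f x * f x)) = r" unfolding s1 using r(1) by simp
      show ?thesis unfolding s1 s2 using r(1) by (simp add: field_simps)
    qed
    also have "\<dots> = r * d / (2 * f x)"
    proof -
      have rr: "r * r * (r * r) = f x * f x" using r ab by simp
      have "r * d * (2 * r * (r * r)) = 2 * d * (r * r * (r * r))" by (simp add: mult_ac)
      also have "\<dots> = 2 * d * (f x * f x)" using rr by simp
      also have "\<dots> = d * f x * (2 * f x)" by (simp add: mult_ac)
      finally have "r * d * (2 * r * (r * r)) = d * f x * (2 * f x)" .
      then have *: "d * f x * (2 * f x) = r * d * (2 * r * (r * r))" by (rule sym)
      show ?thesis
        apply (rule iffD2[OF frac_eq_eq])
          apply (use r(1) in simp)
         apply (use assms(2) in simp)
        by (rule *)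
    qed
    finally show ?thesis by (simp add: r_def)
  qed
  from d2 have "((\<lambda>y. sqrt (sqrt (f y * f y))) has_real_derivative sqrt \<bar>f x\<bar> * d / (2 * f x)) (at x)"
    by (simp only: eqv)
  then show ?thesis by (simp only: e)
qed

lemma zero_deriv_eq:
  fixes f :: "real \<Rightarrow> real"
  assumes "\<And>y. min a b \<le> y \<Longrightarrow> y \<le> max a b \<Longrightarrow> (f has_real_derivative 0) (at y)"
  shows "f a = f b"
proof (cases a b rule: linorder_cases)
  case less
  then obtain z where "f b - f a = (b - a) * 0"
    using MVT2[of a b f "\<lambda>_. 0"] assms by auto
  then show ?thesis by simp
next
  case greater
  then obtain z where "f a - f b = (a - b) * 0"
    using MVT2[of b a f "\<lambda>_. 0"] assms by auto
  then show ?thesis by simp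
qed simp

lemma const_on_D:
  fixes D :: "(real*real) set" and g :: "real*real \<Rightarrow> real"
  assumes D: "open D" "connected D"
    and gx: "\<And>x t. (x,t) \<in> D \<Longrightarrow> ((\<lambda>y. g (y,t)) has_real_derivative 0) (at x)"
    and gt: "\<And>x t. (x,t) \<in> D \<Longrightarrow> ((\<lambda>s. g (x,s)) has_real_derivative 0) (at t)"
    and ab: "a \<in> D" "b \<in> D"
  shows "g a = g b"
proof (rule connected_local_const[OF D(2) ab])
  show "\<forall>a\<in>D. eventually (\<lambda>b. g a = g b) (at a within D)"
  proof
    fix a assume a: "a \<in> D"
    obtain x t where xt: "a = (x,t)" by fastforce
    obtain r where r: "r > 0" "ball a r \<subseteq> D" using D(1) a open_contains_ball by blast
    have "g a = g b" if b: "dist b a < r" for b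
    proof -
      obtain x' t' where b': "b = (x',t')" by fastforce
      have dd: "dist (x',t') (x,t) = sqrt ((dist x' x)\<^sup>2 + (dist t' t)\<^sup>2)" by (rule dist_Pair_Pair)
      have "g (x,t) = g (x',t)"
      proof (rule zero_deriv_eq[of x x' "\<lambda>y. g (y,t)"])
        fix y assume y: "min x x' \<le> y" "y \<le> max x x'"
        have "dist (y,t) (x,t) = \<bar>y - x\<bar>" by (simp add: dist_Pair_Pair dist_real_def)
        also have "\<dots> \<le> \<bar>x' - x\<bar>" using y by (auto simp: min_def max_def split: if_splits)
        also have "\<dots> \<le> dist (x',t') (x,t)" unfolding dd dist_real_def
          using real_sqrt_ge_abs1[of "x'-x" "t'-t"] by simp
        finally have "(y,t) \<in> ball a r" using b b' xt by (simp add: dist_commute)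
        then show "((\<lambda>y. g (y,t)) has_real_derivative 0) (at y)" using gx r by blast
      qed
      also have "g (x',t) = g (x',t')"
      proof (rule zero_deriv_eq[of t t' "\<lambda>s. g (x',s)"])
        fix s assume s: "min t t' \<le> s" "s \<le> max t t'"
        have le: "\<bar>s - t\<bar> \<le> \<bar>t' - t\<bar>" using s by (auto simp: min_def max_def split: if_splits)
        have sq: "(s - t)\<^sup>2 \<le> (t' - t)\<^sup>2" using le by (metis abs_le_square_iff)
        have "dist (x',s) (x,t) = sqrt ((dist x' x)\<^sup>2 + (dist s t)\<^sup>2)" by (rule dist_Pair_Pair)
        also have "\<dots> \<le> sqrt ((dist x' x)\<^sup>2 + (dist t' t)\<^sup>2)"
          using sq by (simp add: dist_real_def)
        finally have "(x',s) \<in> ball a r" using b b' xt dd by (simp add: dist_commute)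
        then show "((\<lambda>s. g (x',s)) has_real_derivative 0) (at s)" using gt r by blast
      qed
      finally show ?thesis using xt b' by simp
    qed
    then show "eventually (\<lambda>b. g a = g b) (at a within D)"
      unfolding eventually_at using r by blast
  qed
qed

lemma pt_transfer:
  fixes D :: "(real*real) set"
  assumes "open D" "q \<in> D" "\<And>r. r \<in> D \<Longrightarrow> g r = h r"
  shows "pt g q = pt h q"
proof -
  obtain x t where q: "q = (x,t)" by fastforce
  have "open {s. (x,s) \<in> D}" by (rule open_slice_t[OF assms(1)])
  moreover have "t \<in> {s. (x,s) \<in> D}" using assms(2) q by simp
  ultimately have "eventually (\<lambda>s. s \<in> {s. (x,s) \<in> D}) (nhds t)" by (rule eventually_nhds_in_open)
  then have "eventually (\<lambda>s. g (x,s) = h (x,s)) (nhds t)"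
    by (rule eventually_mono) (use assms(3) in auto)
  then have "deriv (\<lambda>s. g (x,s)) t = deriv (\<lambda>s. h (x,s)) t" by (rule deriv_cong_ev) simp
  then show ?thesis by (simp add: pt_def q)
qed



lemmas dI = DERIV_divide DERIV_mult DERIV_add DERIV_diff DERIV_const


lemma algPT:
  fixes F1 F2 F3 Ft G1 G2 V0 V1 Vt lam :: real
  assumes "F1 \<noteq> 0" "lam \<noteq> 0"
    and hVt: "Vt = lam * (Ft / (lam * F1) * V1 - 1/2 * ((G1 * F1 - Ft * F2) / (lam * (F1 * F1))) * V0)"
  shows "lam *
     ((G1 * F1 - Ft * F2) /
      (lam * (F1 * F1)) *
      V1 +
      - (1 / 2 *
         (F3 / F1 -
          3 / 2 * F2\<^sup>2 / F1\<^sup>2)) *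
      V0 *
      (Ft / (lam * F1)) -
      1 / 2 *
      (((G2 * F1 -
         Ft * F3) /
        (lam * F1\<^sup>2) -
        2 * F2 *
        (G1 * F1 - Ft * F2) /
        (lam * F1 ^ 3)) *
       V0 +
       V1 *
       ((G1 * F1 - Ft * F2) /
        (lam * (F1 * F1))))) +
     ((G2 * V0 + Vt * F2) *
      (2 * F1) -
      F2 * V0 *
      (0 * F1 + G1 * 2)) /
     (2 * F1 * (2 * F1)) =
     G1 / (2 * F1) *
     (V1 +
      F2 * V0 /
      (2 * F1))"
  using assms(1,2) unfolding hVt by (simp add: field_simps power2_eq_square power3_eq_cube) (simp add: algebra_simps)?

theorem mainTheorem6:
  fixes \<phi> V :: "real \<times> real \<Rightarrow> real" and lam :: real and D :: "(real \<times> real) set"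
  assumes "lam \<noteq> 0"
    and "open D" and "connected D" and "D \<noteq> {}"
    and "smooth2_on D \<phi>"
    and "\<forall>q\<in>D. px \<phi> q \<noteq> 0"
    and "\<forall>q\<in>D. pt (schwarzian \<phi>) q
                + 4 / lam * px (\<lambda>r. pt \<phi> r / px \<phi> r) q = 0"
    and "smooth2_on D V"
  shows "((let p = (\<lambda>r. pt \<phi> r / (lam * px \<phi> r));
              U = (\<lambda>r. 1/2 * schwarzian \<phi> r + 1 / lam)
          in (\<forall>q\<in>D. px (px V) q + (U q - 1 / lam) * V q = 0 \<and>
                     pt V q = lam * (p q * px V q - 1/2 * px p q * V q)))
         \<longleftrightarrow> (\<exists>A B :: real. \<forall>q\<in>D. V q = (A * \<phi> q + B) / sqrt \<bar>px \<phi> q\<bar>))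
       \<and> (\<forall>A B :: real. (\<forall>q\<in>D. (A * \<phi> q + B) / sqrt \<bar>px \<phi> q\<bar> = 0)
                       \<longleftrightarrow> (A = 0 \<and> B = 0))"
proof -
  note lam = assms(1) and D = assms(2) and conn = assms(3) and ne = assms(4)
    and sm = assms(5) and nz = assms(6) and smV = assms(8)
  have nz': "\<And>x t. (x,t) \<in> D \<Longrightarrow> px \<phi> (x,t) \<noteq> 0" using nz by blast
  note sm1 = smooth_px[OF sm]
  note sm2 = smooth_px[OF sm1]
  note smt = smooth_pt[OF sm]
  note smtx = smooth_px[OF smt]
  note smV1 = smooth_px[OF smV]
  define R where "R = (\<lambda>r. sqrt \<bar>px \<phi> r\<bar>)"
  have Rnz: "\<And>x t. (x,t) \<in> D \<Longrightarrow> R (x,t) \<noteq> 0" using nz by (auto simp: R_def)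
  have Rx: "\<And>x t. (x,t) \<in> D \<Longrightarrow>
      ((\<lambda>y. R (y,t)) has_real_derivative R (x,t) * px (px \<phi>) (x,t) / (2 * px \<phi> (x,t))) (at x)"
    unfolding R_def by (rule sqrt_abs_deriv[OF hx[OF sm1]]) (use nz in auto)
  have Rt: "\<And>x t. (x,t) \<in> D \<Longrightarrow>
      ((\<lambda>s. R (x,s)) has_real_derivative R (x,t) * pt (px \<phi>) (x,t) / (2 * px \<phi> (x,t))) (at t)"
    unfolding R_def by (rule sqrt_abs_deriv[OF ht[OF sm1]]) (use nz in auto)
  have c1: "\<And>x t. (x,t) \<in> D \<Longrightarrow> pt (px \<phi>) (x,t) = px (pt \<phi>) (x,t)"
    by (rule clairaut[OF D sm])
  have cV: "\<And>x t. (x,t) \<in> D \<Longrightarrow> pt (px V) (x,t) = px (pt V) (x,t)"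
    by (rule clairaut[OF D smV])
  have c2: "\<And>x t. (x,t) \<in> D \<Longrightarrow> pt (px (px \<phi>)) (x,t) = px (px (pt \<phi>)) (x,t)"
  proof -
    fix x t assume q: "(x,t) \<in> D"
    have "pt (px (px \<phi>)) (x,t) = px (pt (px \<phi>)) (x,t)" by (rule clairaut[OF D sm1 q])
    also have "\<dots> = px (px (pt \<phi>)) (x,t)"
      by (rule px_transfer[OF D q]) (use c1 in auto)
    finally show "pt (px (px \<phi>)) (x,t) = px (px (pt \<phi>)) (x,t)" .
  qed
  define p where "p = (\<lambda>r. pt \<phi> r / (lam * px \<phi> r))"
  define Q1 where "Q1 = (\<lambda>r. (px (pt \<phi>) r * px \<phi> r - pt \<phi> r * px (px \<phi>) r) / (lam * (px \<phi> r * px \<phi> r)))"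
  have pX: "\<And>x t. (x,t) \<in> D \<Longrightarrow> ((\<lambda>y. p (y,t)) has_real_derivative Q1 (x,t)) (at x)"
  proof -
    fix x t assume q: "(x,t) \<in> D"
    show "((\<lambda>y. p (y,t)) has_real_derivative Q1 (x,t)) (at x)"
      unfolding p_def
      apply (rule DERIV_val)
       apply ((rule dI hx[OF smt q] hx[OF sm q] hx[OF sm1 q] | (simp add: nz'[OF q] lam; fail))+)[1]
      using nz'[OF q] lam by (simp add: Q1_def field_simps)
  qed
  have pxp: "\<And>x t. (x,t) \<in> D \<Longrightarrow> px p (x,t) = Q1 (x,t)"
    using pX px_eqI by blast
  define Q2 where "Q2 = (\<lambda>r. (px (px (pt \<phi>)) r * px \<phi> r - pt \<phi> r * px (px (px \<phi>)) r) / (lam * (px \<phi> r)^2)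
      - 2 * px (px \<phi>) r * (px (pt \<phi>) r * px \<phi> r - pt \<phi> r * px (px \<phi>) r) / (lam * (px \<phi> r)^3))"
  have Q1X: "\<And>x t. (x,t) \<in> D \<Longrightarrow> ((\<lambda>y. Q1 (y,t)) has_real_derivative Q2 (x,t)) (at x)"
  proof -
    fix x t assume q: "(x,t) \<in> D"
    show "?thesis x t"
      unfolding Q1_def
      apply (rule DERIV_val)
       apply ((rule dI hx[OF smtx q] hx[OF smt q] hx[OF sm1 q] hx[OF sm2 q] hx[OF sm q] | (simp add: nz'[OF q] lam; fail))+)[1]
      using nz'[OF q] lam by (simp add: Q2_def field_simps power2_eq_square power3_eq_cube)
  qed
  have fwd: "\<exists>A B. \<forall>q\<in>D. V q = (A * \<phi> q + B) / sqrt \<bar>px \<phi> q\<bar>"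
    if H: "\<forall>q\<in>D. px (px V) q + (1/2 * schwarzian \<phi> q) * V q = 0 \<and>
                     pt V q = lam * (p q * px V q - 1/2 * px p q * V q)"
  proof -
    have HV2: "\<And>x t. (x,t) \<in> D \<Longrightarrow> px (px V) (x,t) = - (1/2 * schwarzian \<phi> (x,t)) * V (x,t)"
    proof -
      fix x t assume q: "(x,t) \<in> D"
      have "px (px V) (x,t) + (1/2 * schwarzian \<phi> (x,t)) * V (x,t) = 0" using H q by blast
      then show "px (px V) (x,t) = - (1/2 * schwarzian \<phi> (x,t)) * V (x,t)" by (simp add: algebra_simps)
    qed
    have HVt: "\<And>x t. (x,t) \<in> D \<Longrightarrow> pt V (x,t) = lam * (p (x,t) * px V (x,t) - 1/2 * Q1 (x,t) * V (x,t))"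
    proof -
      fix x t assume q: "(x,t) \<in> D"
      show "pt V (x,t) = lam * (p (x,t) * px V (x,t) - 1/2 * Q1 (x,t) * V (x,t))"
        using H q pxp[OF q] by auto
    qed
    define a where "a = (\<lambda>r. R r * (px V r + px (px \<phi>) r * V r / (2 * px \<phi> r)) / px \<phi> r)"
    define b where "b = (\<lambda>r. \<phi> r * a r - V r * R r)"
    have aX: "((\<lambda>y. a (y,t)) has_real_derivative 0) (at x)" if q: "(x,t) \<in> D" for x t
      unfolding a_def
      apply (rule DERIV_val)
       apply ((rule dI Rx[OF q] hx[OF smV q] hx[OF smV1 q] hx[OF sm1 q] hx[OF sm2 q] | (simp add: nz'[OF q] lam; fail))+)[1]
      using nz'[OF q] Rnz[OF q] by (simp add: HV2[OF q] schwarzian_def field_simps power2_eq_square)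
    have aT: "((\<lambda>s. a (x,s)) has_real_derivative 0) (at t)" if q: "(x,t) \<in> D" for x t
    proof -
      have Vxt: "pt (px V) (x,t) = lam * (Q1 (x,t) * px V (x,t) + px (px V) (x,t) * p (x,t)
          - 1/2 * (Q2 (x,t) * V (x,t) + px V (x,t) * Q1 (x,t)))"
      proof -
        have "pt (px V) (x,t) = px (pt V) (x,t)" by (rule cV[OF q])
        also have "\<dots> = px (\<lambda>r. lam * (p r * px V r - 1/2 * Q1 r * V r)) (x,t)"
          by (rule px_transfer[OF D q]) (use HVt in auto)
        also have "\<dots> = lam * (Q1 (x,t) * px V (x,t) + px (px V) (x,t) * p (x,t)
          - 1/2 * (Q2 (x,t) * V (x,t) + px V (x,t) * Q1 (x,t)))"
          apply (rule px_eqI)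
          apply (rule DERIV_val)
           apply ((rule dI pX[OF q] Q1X[OF q] hx[OF smV q] hx[OF smV1 q] | (simp add: nz'[OF q] lam; fail))+)[1]
          by (simp add: algebra_simps)
        finally show ?thesis .
      qed
      have PT: "((\<lambda>s. px V (x,s) + px (px \<phi>) (x,s) * V (x,s) / (2 * px \<phi> (x,s))) has_real_derivative
          px (pt \<phi>) (x,t) / (2 * px \<phi> (x,t)) * (px V (x,t) + px (px \<phi>) (x,t) * V (x,t) / (2 * px \<phi> (x,t)))) (at t)"
        apply (rule DERIV_val)
         apply ((rule dI ht[OF smV q] ht[OF smV1 q] ht[OF sm1 q] ht[OF sm2 q] | (simp add: nz'[OF q] lam; fail))+)[1]
        apply (simp only: Vxt c1[OF q] c2[OF q] HV2[OF q] schwarzian_def Q1_def Q2_def p_def)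
        apply (rule algPT[OF nz'[OF q] lam])
        by (simp add: HVt[OF q] p_def Q1_def)
      show ?thesis
        unfolding a_def
        apply (rule DERIV_val)
         apply ((rule PT Rt[OF q] ht[OF sm1 q] DERIV_divide DERIV_mult | (simp add: nz'[OF q] lam; fail))+)[1]
        using nz'[OF q] Rnz[OF q] lam
        by (simp add: c1[OF q] field_simps)
    qed
    have bX: "((\<lambda>y. b (y,t)) has_real_derivative 0) (at x)" if q: "(x,t) \<in> D" for x t
      unfolding b_def
      apply (rule DERIV_val)
       apply ((rule dI aX[OF q] Rx[OF q] hx[OF smV q] hx[OF sm q] | (simp add: nz'[OF q] lam; fail))+)[1]
      using nz'[OF q] Rnz[OF q] lam by (simp add: a_def field_simps)
    have bT: "((\<lambda>s. b (x,s)) has_real_derivative 0) (at t)" if q: "(x,t) \<in> D" for x t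
      unfolding b_def
      apply (rule DERIV_val)
       apply ((rule dI aT[OF q] Rt[OF q] ht[OF smV q] ht[OF sm q] | (simp add: nz'[OF q] lam; fail))+)[1]
      using nz'[OF q] Rnz[OF q] lam by (simp add: a_def HVt[OF q] c1[OF q] Q1_def p_def field_simps)
    obtain q0 where q0: "q0 \<in> D" using ne by blast
    have ca: "\<And>r. r \<in> D \<Longrightarrow> a r = a q0"
      using const_on_D[OF D conn, of a] aX aT q0 by blast
    have cb: "\<And>r. r \<in> D \<Longrightarrow> b r = b q0"
      using const_on_D[OF D conn, of b] bX bT q0 by blast
    have "V r = (a q0 * \<phi> r + - b q0) / sqrt \<bar>px \<phi> r\<bar>" if r: "r \<in> D" for r
    proof -
      obtain x t where xt: "r = (x,t)" by fastforce
      have "a r * \<phi> r - b r = V r * R r" unfolding b_def by simp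
      then show ?thesis using ca[OF r] cb[OF r] Rnz[of x t] r xt
        by (simp add: R_def field_simps)
    qed
    then show ?thesis by blast
  qed
  have bwd: "\<forall>q\<in>D. px (px V) q + (1/2 * schwarzian \<phi> q) * V q = 0 \<and>
                     pt V q = lam * (p q * px V q - 1/2 * px p q * V q)"
    if E: "\<exists>A B. \<forall>q\<in>D. V q = (A * \<phi> q + B) / sqrt \<bar>px \<phi> q\<bar>"
  proof -
    obtain A B where AB: "\<And>r. r \<in> D \<Longrightarrow> V r = (A * \<phi> r + B) / R r" using E by (auto simp: R_def)
    define E1 where "E1 = (\<lambda>r. (A * px \<phi> r - (A * \<phi> r + B) * px (px \<phi>) r / (2 * px \<phi> r)) / R r)"
    have VX: "((\<lambda>y. V (y,t)) has_real_derivative E1 (x,t)) (at x)" if q: "(x,t) \<in> D" for x t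
      apply (rule hx_transfer[OF D q, of V "\<lambda>r. (A * \<phi> r + B) / R r"])
      using AB apply blast
      apply (rule DERIV_val)
       apply ((rule dI hx[OF sm q] Rx[OF q] | (simp add: nz'[OF q] Rnz[OF q] lam; fail))+)[1]
      using nz'[OF q] Rnz[OF q] by (simp add: E1_def field_simps)
    have pxV: "px V (x,t) = E1 (x,t)" if q: "(x,t) \<in> D" for x t
      using VX[OF q] by (rule px_eqI)
    have VXX: "px (px V) (x,t) = - (1/2 * schwarzian \<phi> (x,t)) * V (x,t)" if q: "(x,t) \<in> D" for x t
    proof -
      have "px (px V) (x,t) = px E1 (x,t)"
        by (rule px_transfer[OF D q]) (use pxV in auto)
      also have "\<dots> = - (1/2 * schwarzian \<phi> (x,t)) * V (x,t)"
        unfolding E1_def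
        apply (rule px_eqI)
        apply (rule DERIV_val)
         apply ((rule dI hx[OF sm q] hx[OF sm1 q] hx[OF sm2 q] Rx[OF q] | (simp add: nz'[OF q] Rnz[OF q] lam; fail))+)[1]
        using nz'[OF q] Rnz[OF q] by (simp add: AB[OF q] schwarzian_def field_simps power2_eq_square)
      finally show ?thesis .
    qed
    have VT: "pt V (x,t) = lam * (p (x,t) * px V (x,t) - 1/2 * px p (x,t) * V (x,t))" if q: "(x,t) \<in> D" for x t
    proof -
      have "pt V (x,t) = pt (\<lambda>r. (A * \<phi> r + B) / R r) (x,t)"
        by (rule pt_transfer[OF D q]) (use AB in auto)
      also have "\<dots> = lam * (p (x,t) * px V (x,t) - 1/2 * px p (x,t) * V (x,t))"
        apply (rule pt_eqI)
        apply (rule DERIV_val)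
         apply ((rule dI ht[OF sm q] Rt[OF q] | (simp add: nz'[OF q] Rnz[OF q] lam; fail))+)[1]
        apply (simp only: pxV[OF q] pxp[OF q] AB[OF q])
        using nz'[OF q] Rnz[OF q] lam
        by (simp add: E1_def p_def Q1_def c1[OF q] field_simps)
      finally show ?thesis .
    qed
    show ?thesis
    proof
      fix q assume q: "q \<in> D"
      obtain x t where xt: "q = (x,t)" by fastforce
      show "px (px V) q + (1/2 * schwarzian \<phi> q) * V q = 0 \<and>
                     pt V q = lam * (p q * px V q - 1/2 * px p q * V q)"
        using VXX[of x t] VT[of x t] q xt by simp
    qed
  qed
  have part1: "(\<forall>q\<in>D. px (px V) q + ((1/2 * schwarzian \<phi> q + 1 / lam) - 1 / lam) * V q = 0 \<and>
                     pt V q = lam * (p q * px V q - 1/2 * px p q * V q))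
         \<longleftrightarrow> (\<exists>A B :: real. \<forall>q\<in>D. V q = (A * \<phi> q + B) / sqrt \<bar>px \<phi> q\<bar>)"
    using fwd bwd by auto
  have part2: "\<forall>A B :: real. (\<forall>q\<in>D. (A * \<phi> q + B) / sqrt \<bar>px \<phi> q\<bar> = 0) \<longleftrightarrow> (A = 0 \<and> B = 0)"
  proof (intro allI iffI)
    fix A B :: real
    assume Z: "\<forall>q\<in>D. (A * \<phi> q + B) / sqrt \<bar>px \<phi> q\<bar> = 0"
    have Z': "\<And>r. r \<in> D \<Longrightarrow> A * \<phi> r + B = 0" using Z nz by auto
    obtain x t where q: "(x,t) \<in> D" using ne by auto
    have d1: "((\<lambda>y. A * \<phi> (y,t) + B) has_real_derivative A * px \<phi> (x,t) + 0) (at x)"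
      by (rule DERIV_add[OF DERIV_cmult[OF hx[OF sm q]] DERIV_const])
    have d2: "((\<lambda>y. A * \<phi> (y,t) + B) has_real_derivative 0) (at x)"
      by (rule hx_transfer[OF D q, of "\<lambda>r. A * \<phi> r + B" "\<lambda>r. 0"]) (use Z' in auto)
    have "A * px \<phi> (x,t) = 0" using DERIV_unique[OF d1 d2] by simp
    then have A0: "A = 0" using nz'[OF q] by simp
    then show "A = 0 \<and> B = 0" using Z'[OF q] by simp
  qed simp
  show ?thesis
    unfolding Let_def using part1[unfolded p_def] part2 by blast
qed

end
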